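(* Let $n\ge 2$, $c\ge 1$, $\Delta>0$, and let $V'$ be a family of at most $n$ vectors in $\mathbb{R}^d$, each of Euclidean length in $[n^{-2},2\sqrt n]$, such that every vertex has expected degree at most $c$ in $G\sim\mathcal{G}_{V'}$ and the expected number of triangles in $G\sim\mathcal{G}_{V'}$ is at least $\Delta n/2$. For each integer $r$ let $V_r=\{\vec v\in V': \|\vec v\|_2\in[2^r,2^{r+1})\}$, let $R=\{r: |V_r|\ge (\Delta/60c^2)(n/\lg n)\}$, and let $V''=\bigcup_{r\in R}V_r$. Then the expected number of triangles in $G\sim\mathcal{G}_{V''}$ is at least $\Delta n/8$.
   Context: For a finite family of vectors $W=(\vec w_i)_{i\in I}$ in $\mathbb{R}^d$, $\mathcal{G}_W$ is the distribution on simple undirected graphs with vertex set $I$ in which, independently for each unordered pair $\{i,j\}$ with $i\neq j$, the edge $(i,j)$ is present with probability $\max(0,\min(\vec w_i\cdot\vec w_j,1))$. The expected degree of $i$ is $\sum_{j\ne i}\max(0,\min(\vec w_i\cdot\vec w_j,1))$. A triangle is a set of three distinct pairwise adjacent vertices. $\lg$ is the base-2 logarithm. *)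

theory Defs
  imports "HOL-Analysis.Analysis" "HOL-Probability.Probability"
begin

definition edge_prob :: "('i \<Rightarrow> 'v::real_inner) \<Rightarrow> 'i \<Rightarrow> 'i \<Rightarrow> real" where
  "edge_prob w i j = max 0 (min (w i \<bullet> w j) 1)"

definition expected_degree :: "'i set \<Rightarrow> ('i \<Rightarrow> 'v::real_inner) \<Rightarrow> 'i \<Rightarrow> real" where
  "expected_degree I w i = (\<Sum>j\<in>I - {i}. edge_prob w i j)"

definition vpairs :: "'i set \<Rightarrow> 'i set set" where
  "vpairs I = {e. e \<subseteq> I \<and> card e = 2}"

text \<open>Probability of an unordered pair (well defined since edge_prob is symmetric).\<close>
definition pair_prob :: "('i \<Rightarrow> 'v::real_inner) \<Rightarrow> 'i set \<Rightarrow> real" where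
  "pair_prob w e = (let i = (SOME i. i \<in> e); j = (SOME j. j \<in> e \<and> j \<noteq> i) in edge_prob w i j)"

definition random_graph :: "'i set \<Rightarrow> ('i \<Rightarrow> 'v::real_inner) \<Rightarrow> 'i set set pmf" where
  "random_graph I w =
     map_pmf (\<lambda>f. {e \<in> vpairs I. f e})
       (Pi_pmf (vpairs I) False (\<lambda>e. bernoulli_pmf (pair_prob w e)))"

definition num_triangles :: "'i set \<Rightarrow> 'i set set \<Rightarrow> nat" where
  "num_triangles I E = card {T. T \<subseteq> I \<and> card T = 3 \<and>
       (\<forall>i\<in>T. \<forall>j\<in>T. i \<noteq> j \<longrightarrow> {i, j} \<in> E)}"

definition expected_triangles :: "'i set \<Rightarrow> ('i \<Rightarrow> 'v::real_inner) \<Rightarrow> real" where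
  "expected_triangles I w =
     measure_pmf.expectation (random_graph I w) (\<lambda>E. real (num_triangles I E))"

definition lg :: "real \<Rightarrow> real" where "lg x = log 2 x"

end

theory Submission
  imports Defs
begin


definition tri :: "'i set \<Rightarrow> 'i set set" where "tri I = {T. T \<subseteq> I \<and> card T = 3}"
definition tprob :: "('i \<Rightarrow> 'v::real_inner) \<Rightarrow> 'i set \<Rightarrow> real" where
  "tprob w T = (\<Prod>e\<in>vpairs T. pair_prob w e)"

lemma finite_vpairs: "finite I \<Longrightarrow> finite (vpairs I)"
  unfolding vpairs_def by (rule finite_subset[of _ "Pow I"]) auto

lemma finite_tri: "finite I \<Longrightarrow> finite (tri I)"
  unfolding tri_def by (rule finite_subset[of _ "Pow I"]) auto

lemma vpairs_mono: "T \<subseteq> I \<Longrightarrow> vpairs T \<subseteq> vpairs I"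
  unfolding vpairs_def by auto

lemma edge_prob_bounds: "0 \<le> edge_prob w i j" "edge_prob w i j \<le> 1"
  unfolding edge_prob_def by auto

lemma pair_prob_bounds: "0 \<le> pair_prob w e" "pair_prob w e \<le> 1"
  unfolding pair_prob_def Let_def by (auto simp: edge_prob_bounds)

lemma num_tri_eq:
  assumes "finite I"
  shows "real (num_triangles I {e \<in> vpairs I. f e}) =
    (\<Sum>T\<in>tri I. \<Prod>e\<in>vpairs I. (if e \<in> vpairs T then (if f e then 1 else 0) else 1::real))"
proof -
  have eq: "(\<forall>i\<in>T. \<forall>j\<in>T. i \<noteq> j \<longrightarrow> {i, j} \<in> {e \<in> vpairs I. f e}) \<longleftrightarrow> (\<forall>e\<in>vpairs T. f e)"
    if "T \<in> tri I" for T
  proof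
    assume H: "\<forall>i\<in>T. \<forall>j\<in>T. i \<noteq> j \<longrightarrow> {i, j} \<in> {e \<in> vpairs I. f e}"
    show "\<forall>e\<in>vpairs T. f e"
    proof
      fix e assume "e \<in> vpairs T"
      then obtain x y where "e = {x,y}" "x \<noteq> y" "x \<in> T" "y \<in> T"
        unfolding vpairs_def card_2_iff by auto
      with H show "f e" by auto
    qed
  next
    assume H: "\<forall>e\<in>vpairs T. f e"
    show "\<forall>i\<in>T. \<forall>j\<in>T. i \<noteq> j \<longrightarrow> {i, j} \<in> {e \<in> vpairs I. f e}"
    proof (intro ballI impI)
      fix i j assume "i \<in> T" "j \<in> T" "i \<noteq> j"
      then have "{i,j} \<in> vpairs T" unfolding vpairs_def by auto
      moreover have "{i,j} \<in> vpairs I" using \<open>i \<in> T\<close> \<open>j \<in> T\<close> \<open>i \<noteq> j\<close> that unfolding vpairs_def tri_def by auto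
      ultimately show "{i, j} \<in> {e \<in> vpairs I. f e}" using H by auto
    qed
  qed
  have pr: "(\<Prod>e\<in>vpairs I. (if e \<in> vpairs T then (if f e then 1 else 0) else 1::real))
        = (if (\<forall>e\<in>vpairs T. f e) then 1 else 0)" if "T \<in> tri I" for T
  proof (cases "\<forall>e\<in>vpairs T. f e")
    case True
    then show ?thesis by (intro trans[OF prod.neutral]) auto
  next
    case False
    then obtain e where "e \<in> vpairs T" "\<not> f e" by auto
    moreover have "e \<in> vpairs I" using that \<open>e \<in> vpairs T\<close> vpairs_mono unfolding tri_def by blast
    ultimately have z: "(if e \<in> vpairs T then (if f e then 1 else 0) else 1::real) = 0"
      by simp
    have "(\<Prod>e\<in>vpairs I. (if e \<in> vpairs T then (if f e then 1 else 0) else 1::real)) = 0"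
      by (rule prod_zero[OF finite_vpairs[OF assms]]) (use z \<open>e \<in> vpairs I\<close> in blast)
    then show ?thesis using False by simp
  qed
  have "{T. T \<subseteq> I \<and> card T = 3 \<and> (\<forall>i\<in>T. \<forall>j\<in>T. i \<noteq> j \<longrightarrow> {i, j} \<in> {e \<in> vpairs I. f e})}
      = {T\<in>tri I. \<forall>e\<in>vpairs T. f e}"
  proof (rule Collect_cong)
    fix T show "(T \<subseteq> I \<and> card T = 3 \<and> (\<forall>i\<in>T. \<forall>j\<in>T. i \<noteq> j \<longrightarrow> {i, j} \<in> {e \<in> vpairs I. f e}))
      = (T\<in>tri I \<and> (\<forall>e\<in>vpairs T. f e))"
    proof (cases "T \<in> tri I")
      case True
      then show ?thesis using eq[OF True] unfolding tri_def by simp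
    next
      case False
      then show ?thesis unfolding tri_def by auto
    qed
  qed
  then have "real (num_triangles I {e \<in> vpairs I. f e}) = real (card {T\<in>tri I. \<forall>e\<in>vpairs T. f e})"
    unfolding num_triangles_def by simp
  also have "\<dots> = (\<Sum>T\<in>tri I. (if (\<forall>e\<in>vpairs T. f e) then 1 else 0))"
    unfolding real_of_card by (rule sum.inter_filter[OF finite_tri[OF assms]])
  also have "\<dots> = (\<Sum>T\<in>tri I. \<Prod>e\<in>vpairs I. (if e \<in> vpairs T then (if f e then 1 else 0) else 1::real))" using pr by (intro sum.cong) auto
  finally show ?thesis .
qed

lemma finite_bern: "finite (set_pmf (bernoulli_pmf p))"
  by (rule finite_subset[OF subset_UNIV]) simp

lemma exp_tri:
  fixes I :: "'i set" and w :: "'i \<Rightarrow> 'v::real_inner"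
  assumes "finite I"
  shows "expected_triangles I w = (\<Sum>T\<in>tri I. tprob w T)"
proof -
  let ?M = "Pi_pmf (vpairs I) False (\<lambda>e. bernoulli_pmf (pair_prob w e))"
  define g :: "'i set \<Rightarrow> 'i set \<Rightarrow> bool \<Rightarrow> real" where "g = (\<lambda>T e b. if e \<in> vpairs T then (if b then 1 else 0) else (1::real))"
  have "expected_triangles I w = measure_pmf.expectation ?M (\<lambda>f. \<Sum>T\<in>tri I. \<Prod>e\<in>vpairs I. g T e (f e))"
    unfolding expected_triangles_def random_graph_def integral_map_pmf g_def using num_tri_eq[OF assms] by simp
  also have "\<dots> = (\<Sum>T\<in>tri I. measure_pmf.expectation ?M (\<lambda>f. \<Prod>e\<in>vpairs I. g T e (f e)))"
    by (rule Bochner_Integration.integral_sum)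
       (rule integrable_prod_Pi_pmf[where f="g _"], auto intro: finite_vpairs assms integrable_measure_pmf_finite finite_bern)
  also have "\<dots> = (\<Sum>T\<in>tri I. tprob w T)"
  proof (rule sum.cong[OF refl])
    fix T assume T: "T \<in> tri I"
    have "measure_pmf.expectation ?M (\<lambda>f. \<Prod>e\<in>vpairs I. g T e (f e))
        = (\<Prod>e\<in>vpairs I. measure_pmf.expectation (bernoulli_pmf (pair_prob w e)) (g T e))"
      by (rule expectation_prod_Pi_pmf)
         (auto intro: finite_vpairs assms integrable_measure_pmf_finite finite_bern simp: g_def)
    also have "\<dots> = (\<Prod>e\<in>vpairs I. (if e \<in> vpairs T then pair_prob w e else 1))"
      by (intro prod.cong refl) (simp add: pair_prob_bounds g_def)
    also have "\<dots> = (\<Prod>e \<in> vpairs I \<inter> vpairs T. pair_prob w e)"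
      by (simp add: prod.inter_restrict finite_vpairs assms)
    also have "vpairs I \<inter> vpairs T = vpairs T" using vpairs_mono T by (auto simp: tri_def)
    finally show "measure_pmf.expectation ?M (\<lambda>f. \<Prod>e\<in>vpairs I. g T e (f e)) = tprob w T"
      unfolding tprob_def .
  qed
  finally show ?thesis .
qed



lemma edge_sym: "edge_prob w i j = edge_prob w j i"
  by (simp add: edge_prob_def inner_commute)

lemma pair_prob_eq:
  assumes "a \<noteq> b" shows "pair_prob w {a,b} = edge_prob w a b"
proof -
  define i where "i = (SOME i. i \<in> {a,b})"
  define j where "j = (SOME j. j \<in> {a,b} \<and> j \<noteq> i)"
  have i: "i \<in> {a,b}" unfolding i_def by (rule someI[of _ a]) simp
  have "\<exists>j. j \<in> {a,b} \<and> j \<noteq> i" using i assms by auto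
  then have j: "j \<in> {a,b} \<and> j \<noteq> i" unfolding j_def by (rule someI_ex)
  have "pair_prob w {a,b} = edge_prob w i j"
    unfolding pair_prob_def Let_def i_def j_def by simp
  also have "\<dots> = edge_prob w a b" using i j edge_sym by auto
  finally show ?thesis .
qed

lemma vpairs3:
  assumes "a \<noteq> b" "a \<noteq> c" "b \<noteq> c"
  shows "vpairs {a,b,c} = {{a,b},{a,c},{b,c}}"
proof
  show "vpairs {a,b,c} \<subseteq> {{a,b},{a,c},{b,c}}"
  proof
    fix e assume "e \<in> vpairs {a,b,c}"
    then obtain x y where e: "e = {x,y}" "x \<noteq> y" "x \<in> {a,b,c}" "y \<in> {a,b,c}"
      unfolding vpairs_def card_2_iff by auto
    then show "e \<in> {{a,b},{a,c},{b,c}}" by auto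
  qed
  show "{{a,b},{a,c},{b,c}} \<subseteq> vpairs {a,b,c}"
    using assms unfolding vpairs_def by auto
qed

lemma tprob3:
  assumes "a \<noteq> b" "a \<noteq> c" "b \<noteq> c"
  shows "tprob w {a,b,c} = edge_prob w a b * edge_prob w a c * edge_prob w b c"
  using assms unfolding tprob_def vpairs3[OF assms]
  by (simp add: pair_prob_eq doubleton_eq_iff)

lemma tprob_nonneg: "0 \<le> tprob w T"
  unfolding tprob_def by (intro prod_nonneg) (simp add: pair_prob_bounds)

lemma tri_local:
  assumes fin: "finite I" and iI: "i \<in> I" and deg: "\<forall>j\<in>I. expected_degree I w j \<le> c"
  shows "(\<Sum>T\<in>{T\<in>tri I. i \<in> T}. tprob w T) \<le> c^2"
proof -
  define P where "P = Sigma (I - {i}) (\<lambda>j. I - {i,j})"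
  have finP: "finite P" unfolding P_def using fin by auto
  have sub: "{T\<in>tri I. i \<in> T} \<subseteq> (\<lambda>(j,k). {i,j,k}) ` P"
  proof
    fix T assume "T \<in> {T\<in>tri I. i \<in> T}"
    then have T: "T \<subseteq> I" "card T = 3" "i \<in> T" unfolding tri_def by auto
    then obtain x y z where xyz: "T = {x,y,z}" "x \<noteq> y" "y \<noteq> z" "x \<noteq> z"
      unfolding card_3_iff by auto
    have inI: "x \<in> I" "y \<in> I" "z \<in> I" using T(1) xyz(1) by auto
    have "i \<in> {x,y,z}" using T(3) xyz(1) by simp
    then have "i = x \<or> i = y \<or> i = z" by simp
    then show "T \<in> (\<lambda>(j,k). {i,j,k}) ` P"
    proof (elim disjE)
      assume h: "i = x"
      have m: "(y,z) \<in> P" unfolding P_def using inI xyz(2-4) h by simp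
      have eqT: "T = (\<lambda>(j,k). {i,j,k}) (y,z)" using xyz(1) h by simp
      show ?thesis using eqT m by (rule image_eqI[where f="\<lambda>(j,k). {i,j,k}"])
    next
      assume h: "i = y"
      have m: "(x,z) \<in> P" unfolding P_def using inI xyz(2-4) h by simp
      have eqT: "T = (\<lambda>(j,k). {i,j,k}) (x,z)" using xyz(1) h by (simp add: insert_commute)
      show ?thesis using eqT m by (rule image_eqI[where f="\<lambda>(j,k). {i,j,k}"])
    next
      assume h: "i = z"
      have m: "(x,y) \<in> P" unfolding P_def using inI xyz(2-4) h by simp
      have eqT: "T = (\<lambda>(j,k). {i,j,k}) (x,y)" using xyz(1) h by (simp add: insert_commute)
      show ?thesis using eqT m by (rule image_eqI[where f="\<lambda>(j,k). {i,j,k}"])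
    qed
  qed
  have "(\<Sum>T\<in>{T\<in>tri I. i \<in> T}. tprob w T) \<le> (\<Sum>T\<in>(\<lambda>(j,k). {i,j,k}) ` P. tprob w T)"
    by (rule sum_mono2[OF finite_imageI[OF finP] sub]) (simp add: tprob_nonneg)
  also have "\<dots> \<le> (\<Sum>x\<in>P. ((tprob w) \<circ> (\<lambda>(j,k). {i,j,k})) x)"
    by (rule sum_image_le[OF finP]) (simp add: tprob_nonneg)
  also have "\<dots> \<le> (\<Sum>(j,k)\<in>P. edge_prob w i j * edge_prob w j k)"
  proof (rule sum_mono)
    fix x assume "x \<in> P"
    then obtain j k where x: "x = (j,k)" "i \<noteq> j" "i \<noteq> k" "j \<noteq> k" unfolding P_def by auto
    have "tprob w {i,j,k} = edge_prob w i j * edge_prob w i k * edge_prob w j k"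
      by (rule tprob3[OF x(2-4)])
    also have "\<dots> \<le> edge_prob w i j * 1 * edge_prob w j k"
    proof -
      have "edge_prob w i j * edge_prob w i k \<le> edge_prob w i j"
        by (rule mult_left_le) (simp_all add: edge_prob_bounds)
      then show ?thesis by (simp add: mult_right_mono edge_prob_bounds)
    qed
    finally show "((tprob w) \<circ> (\<lambda>(j,k). {i,j,k})) x \<le> (case x of (j,k) \<Rightarrow> edge_prob w i j * edge_prob w j k)"
      using x by simp
  qed
  also have "\<dots> = (\<Sum>j\<in>I - {i}. edge_prob w i j * (\<Sum>k\<in>I - {i,j}. edge_prob w j k))"
  proof -
    have "(\<Sum>(j,k)\<in>P. edge_prob w i j * edge_prob w j k) = (\<Sum>j\<in>I - {i}. \<Sum>k\<in>I - {i,j}. edge_prob w i j * edge_prob w j k)"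
      unfolding P_def by (rule sum.Sigma[symmetric]) (use fin in auto)
    then show ?thesis by (simp add: sum_distrib_left)
  qed
  also have "\<dots> \<le> (\<Sum>j\<in>I - {i}. edge_prob w i j * c)"
  proof (rule sum_mono)
    fix j assume j: "j \<in> I - {i}"
    have "(\<Sum>k\<in>I - {i,j}. edge_prob w j k) \<le> (\<Sum>k\<in>I - {j}. edge_prob w j k)"
      by (rule sum_mono2) (use fin in \<open>auto simp: edge_prob_bounds\<close>)
    also have "\<dots> \<le> c" using deg j unfolding expected_degree_def by auto
    finally show "edge_prob w i j * (\<Sum>k\<in>I - {i,j}. edge_prob w j k) \<le> edge_prob w i j * c"
      by (intro mult_left_mono edge_prob_bounds)
  qed
  also have "\<dots> = c * expected_degree I w i"
    unfolding expected_degree_def by (simp add: sum_distrib_left mult.commute)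
  also have "\<dots> \<le> c * c"
  proof -
    have "0 \<le> expected_degree I w i" unfolding expected_degree_def by (intro sum_nonneg edge_prob_bounds)
    then have c0: "0 \<le> c" using deg iI by (meson order_trans)
    show ?thesis using deg iI c0 by (simp add: mult_left_mono)
  qed
  finally show ?thesis by (simp add: power2_eq_square)
qed

lemma key:
  assumes fin: "finite I" and JI: "J \<subseteq> I" and deg: "\<forall>j\<in>I. expected_degree I w j \<le> c"
  shows "expected_triangles I w \<le> expected_triangles J w + real (card (I - J)) * c^2"
proof -
  have finJ: "finite J" using fin JI finite_subset by blast
  have triJI: "tri J \<subseteq> tri I" using JI unfolding tri_def by auto
  have finT: "finite (tri I)" by (rule finite_tri[OF fin])
  define f where "f = (\<lambda>i T. if i \<in> T then tprob w T else 0)"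
  have f0: "0 \<le> f i T" for i T unfolding f_def by (simp add: tprob_nonneg)
  have "expected_triangles I w = (\<Sum>T\<in>tri I - tri J. tprob w T) + (\<Sum>T\<in>tri J. tprob w T)"
    unfolding exp_tri[OF fin] by (rule sum.subset_diff[OF triJI finT])
  also have "(\<Sum>T\<in>tri J. tprob w T) = expected_triangles J w" by (rule exp_tri[OF finJ, symmetric])
  also have "(\<Sum>T\<in>tri I - tri J. tprob w T) \<le> (\<Sum>T\<in>tri I - tri J. \<Sum>i\<in>I - J. f i T)"
  proof (rule sum_mono)
    fix T assume T: "T \<in> tri I - tri J"
    then have "T \<subseteq> I" "\<not> T \<subseteq> J" unfolding tri_def by auto
    then obtain i where i: "i \<in> T" "i \<in> I - J" by blast
    have "tprob w T = f i T" using i unfolding f_def by simp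
    also have "\<dots> \<le> (\<Sum>i\<in>I - J. f i T)"
      by (rule member_le_sum) (use i fin f0 in auto)
    finally show "tprob w T \<le> (\<Sum>i\<in>I - J. f i T)" .
  qed
  also have "\<dots> = (\<Sum>i\<in>I - J. \<Sum>T\<in>tri I - tri J. f i T)" by (rule sum.swap)
  also have "\<dots> \<le> (\<Sum>i\<in>I - J. c^2)"
  proof (rule sum_mono)
    fix i assume i: "i \<in> I - J"
    have "(\<Sum>T\<in>tri I - tri J. f i T) \<le> (\<Sum>T\<in>tri I. f i T)"
      by (rule sum_mono2) (use finT f0 in auto)
    also have "\<dots> = (\<Sum>T\<in>{T\<in>tri I. i \<in> T}. tprob w T)"
      unfolding f_def by (rule sum.inter_filter[OF finT, symmetric])
    also have "\<dots> \<le> c^2" by (rule tri_local[OF fin _ deg]) (use i in auto)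
    finally show "(\<Sum>T\<in>tri I - tri J. f i T) \<le> c^2" .
  qed
  also have "\<dots> = real (card (I - J)) * c^2" by simp
  finally show ?thesis by simp
qed



lemma lg_ge1: "n \<ge> 2 \<Longrightarrow> lg (real n) \<ge> 1"
  unfolding lg_def by simp

lemma log_lower: assumes "n \<ge> 2" shows "log 2 (1 / (real n)^2) = -2 * lg (real n)"
  using assms unfolding lg_def by (simp add: log_divide log_nat_power)

lemma log_upper: assumes "n \<ge> 2" shows "log 2 (2 * sqrt (real n)) = 1 + lg (real n) / 2"
  using assms unfolding lg_def by (simp add: log_mult sqrt_def log_root)

lemma bucket:
  assumes "x > 0"
  shows "2 powr (real_of_int \<lfloor>log 2 x\<rfloor>) \<le> x \<and> x < 2 powr (real_of_int \<lfloor>log 2 x\<rfloor> + 1)"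
proof
  have "2 powr (real_of_int \<lfloor>log 2 x\<rfloor>) \<le> 2 powr (log 2 x)"
    by (intro powr_mono) auto
  then show "2 powr (real_of_int \<lfloor>log 2 x\<rfloor>) \<le> x" using assms by simp
  have "2 powr (log 2 x) < 2 powr (real_of_int \<lfloor>log 2 x\<rfloor> + 1)"
    by (intro powr_less_mono) linarith+
  then show "x < 2 powr (real_of_int \<lfloor>log 2 x\<rfloor> + 1)" using assms by simp
qed

theorem mainTheorem7:
  fixes n :: nat and c \<Delta> :: real and I :: "'i set" and v :: "'i \<Rightarrow> 'v::euclidean_space"
  assumes "n \<ge> 2" and "c \<ge> 1" and "\<Delta> > 0"
    and "finite I" and "card I \<le> n"
    and "\<forall>i\<in>I. 1 / (real n)^2 \<le> norm (v i) \<and> norm (v i) \<le> 2 * sqrt (real n)"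
    and "\<forall>i\<in>I. expected_degree I v i \<le> c"
    and "expected_triangles I v \<ge> \<Delta> * real n / 2"
  shows "let Vr = (\<lambda>r::int. {i \<in> I. 2 powr (real_of_int r) \<le> norm (v i)
                                 \<and> norm (v i) < 2 powr (real_of_int r + 1)});
             R = {r::int. real (card (Vr r)) \<ge> (\<Delta> / (60 * c^2)) * (real n / lg (real n))};
             I'' = (\<Union>r\<in>R. Vr r)
         in expected_triangles I'' v \<ge> \<Delta> * real n / 8"
proof -
  note n2 = assms(1) and c1 = assms(2) and D0 = assms(3) and fin = assms(4)
    and norms = assms(6) and deg = assms(7) and ET = assms(8)
  define Vr where "Vr = (\<lambda>r::int. {i \<in> I. 2 powr (real_of_int r) \<le> norm (v i)
                                 \<and> norm (v i) < 2 powr (real_of_int r + 1)})"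
  define L where "L = lg (real n)"
  define thr where "thr = (\<Delta> / (60 * c^2)) * (real n / L)"
  define R where "R = {r::int. real (card (Vr r)) \<ge> thr}"
  define J where "J = (\<Union>r\<in>R. Vr r)"
  have L1: "L \<ge> 1" unfolding L_def by (rule lg_ge1[OF n2])
  have thr0: "thr \<ge> 0" unfolding thr_def using D0 L1 by simp
  have JI: "J \<subseteq> I" unfolding J_def Vr_def by auto
  define a where "a = \<lfloor>-2 * L\<rfloor>"
  define b where "b = \<lfloor>1 + L / 2\<rfloor>"
  have cover: "I - J \<subseteq> (\<Union>r\<in>{a..b} - R. Vr r)"
  proof
    fix i assume i: "i \<in> I - J"
    define r where "r = \<lfloor>log 2 (norm (v i))\<rfloor>"
    have nb: "1 / (real n)^2 \<le> norm (v i)" "norm (v i) \<le> 2 * sqrt (real n)" using norms i by auto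
    have "0 < 1 / (real n)^2" using n2 by simp
    then have pos: "norm (v i) > 0" using nb(1) by linarith
    have inV: "i \<in> Vr r" unfolding Vr_def r_def using bucket[OF pos] i by auto
    have "log 2 (1 / (real n)^2) \<le> log 2 (norm (v i))"
      using nb(1) n2 by (subst log_le_cancel_iff) auto
    then have lo: "-2 * L \<le> log 2 (norm (v i))" using log_lower[OF n2] unfolding L_def by simp
    have "log 2 (norm (v i)) \<le> log 2 (2 * sqrt (real n))"
      using nb(2) pos n2 by (subst log_le_cancel_iff) auto
    then have hi: "log 2 (norm (v i)) \<le> 1 + L / 2" using log_upper[OF n2] unfolding L_def by simp
    have "a \<le> r" unfolding r_def a_def by (rule floor_mono[OF lo])
    moreover have "r \<le> b" unfolding r_def b_def by (rule floor_mono[OF hi])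
    ultimately have "r \<in> {a..b}" by simp
    moreover have "r \<notin> R" using i inV unfolding J_def by auto
    ultimately show "i \<in> (\<Union>r\<in>{a..b} - R. Vr r)" using inV by auto
  qed
  have finV: "finite (Vr r)" for r unfolding Vr_def using fin by auto
  have "card (I - J) \<le> card (\<Union>r\<in>{a..b} - R. Vr r)"
    by (rule card_mono[OF _ cover]) (use finV in auto)
  also have "\<dots> \<le> (\<Sum>r\<in>{a..b} - R. card (Vr r))" by (rule card_UN_le) simp
  finally have "real (card (I - J)) \<le> (\<Sum>r\<in>{a..b} - R. real (card (Vr r)))"
    by (metis of_nat_le_iff of_nat_sum)
  also have "\<dots> \<le> (\<Sum>r\<in>{a..b} - R. thr)"
    by (rule sum_mono) (auto simp: R_def)
  also have "\<dots> = real (card ({a..b} - R)) * thr" by simp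
  also have "\<dots> \<le> real (card {a..b}) * thr"
  proof (intro mult_right_mono thr0)
    have "card ({a..b} - R) \<le> card {a..b}" by (rule card_mono) auto
    then show "real (card ({a..b} - R)) \<le> real (card {a..b})" by linarith
  qed
  also have "real (card {a..b}) \<le> 5.5 * L"
  proof -
    have "real (card {a..b}) = real (nat (b - a + 1))" by simp
    also have "\<dots> \<le> 5.5 * L"
    proof -
      have ha: "-2*L - 1 < real_of_int a" "real_of_int a \<le> -2*L"
        unfolding a_def using floor_correct[of "-2*L"] by linarith+
      have hb: "real_of_int b \<le> 1 + L/2" "1 + L/2 < real_of_int b + 1"
        unfolding b_def using floor_correct[of "1 + L/2"] by linarith+
      have "real_of_int (b - a + 1) > 0" using ha hb L1 by simp
      then have nn: "b - a + 1 \<ge> 0" by simp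
      have "real (nat (b - a + 1)) = real_of_int (b - a + 1)" using nn by simp
      also have "\<dots> \<le> 5.5 * L" using ha hb L1 by simp
      finally show ?thesis .
    qed
    finally show ?thesis .
  qed
  then have "real (card {a..b}) * thr \<le> 5.5 * L * thr" by (intro mult_right_mono thr0)
  finally have cardIJ: "real (card (I - J)) \<le> 5.5 * L * thr" .
  have "real (card (I - J)) * c^2 \<le> 5.5 * L * thr * c^2"
    using cardIJ by (intro mult_right_mono) auto
  also have "\<dots> = 5.5 * \<Delta> * real n / 60"
    unfolding thr_def using L1 c1 by (simp add: field_simps power2_eq_square)
  finally have rem: "real (card (I - J)) * c^2 \<le> 5.5 * \<Delta> * real n / 60" .
  have "expected_triangles I v \<le> expected_triangles J v + real (card (I - J)) * c^2"
    by (rule key[OF fin JI deg])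
  then have "expected_triangles J v \<ge> \<Delta> * real n / 8"
  proof -
    have "\<Delta> * real n \<ge> 0" using D0 by simp
    then show ?thesis using rem ET \<open>expected_triangles I v \<le> expected_triangles J v + real (card (I - J)) * c^2\<close>
      by linarith
  qed
  then show ?thesis
    unfolding Let_def J_def R_def thr_def L_def Vr_def .
qed

end
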